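(* Let $X$ be a non-negative absolutely continuous random variable with PDF $f$, and write $l=\alpha\beta-\alpha-\beta+2$ and $G_{l}(X)=\int_0^\infty f^{l}(x)\,dx$. Let $\delta(\alpha)=\frac{1}{1-\alpha}$. (A) If $0<\alpha<1$, then: $R^\alpha_\beta(X)\le \delta(\alpha)G_{l}(X)$ if $0<\beta<1$ or $\beta\ge 2$; $R^\alpha_\beta(X)\ge \frac12 R^{\frac{\alpha+1}{2}}_{2\beta-1}(X)$ if $\beta\ge1$; and $R^\alpha_\beta(X)\le \frac12 R^{\frac{\alpha+1}{2}}_{2\beta-1}(X)$ if $0<\beta<1$. (B) If $\alpha>1$, then: $R^\alpha_\beta(X)\le \delta(\alpha)G_{l}(X)$ if $1<\beta<2$; $R^\alpha_\beta(X)\le \frac12 R^{\frac{\alpha+1}{2}}_{2\beta-1}(X)$ if $\beta\ge1$; and $R^\alpha_\beta(X)\ge \frac12 R^{\frac{\alpha+1}{2}}_{2\beta-1}(X)$ if $0<\beta<1$.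
   Context: For a non-negative absolutely continuous random variable $X$ with PDF $f$, $0<\alpha<\infty$, $\alpha\ne1$, $\beta>0$, the Rényi information generating function is $R^\alpha_\beta(X)=\frac{1}{1-\alpha}\left(\int_0^\infty f^\alpha(x)\,dx\right)^{\beta-1}$. $G_\gamma(X)=\int_0^\infty f^\gamma(x)dx$ is Golomb's information generating function. All integrals involved are assumed to exist and be finite. *)

theory Defs
  imports "HOL-Analysis.Analysis"
begin

definition is_pdf_nonneg :: "(real \<Rightarrow> real) \<Rightarrow> bool" where
  "is_pdf_nonneg f \<longleftrightarrow> f \<in> borel_measurable lborel \<and> (\<forall>x. 0 \<le> f x) \<and> (\<forall>x<0. f x = 0)
     \<and> set_integrable lborel {0..} f \<and> (LINT x:{0..}|lborel. f x) = 1"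

definition golomb_IGF :: "(real \<Rightarrow> real) \<Rightarrow> real \<Rightarrow> real" where
  "golomb_IGF f \<gamma> = (LINT x:{0..}|lborel. f x powr \<gamma>)"

definition renyi_IGF :: "(real \<Rightarrow> real) \<Rightarrow> real \<Rightarrow> real \<Rightarrow> real" where
  "renyi_IGF f \<alpha> \<beta> = 1 / (1 - \<alpha>) * (golomb_IGF f \<alpha>) powr (\<beta> - 1)"

definition delta_fn :: "real \<Rightarrow> real" where
  "delta_fn \<alpha> = 1 / (1 - \<alpha>)"

end

theory Submission imports Defs begin

lemma tangent_convex:
  fixes p a t :: real
  assumes p: "p \<le> 0 \<or> 1 \<le> p" and a: "a > 0" and t: "t > 0"
  shows "a powr p + p * a powr (p - 1) * (t - a) \<le> t powr p"
proof -
  have cv: "convex_on {0<..} (\<lambda>x::real. x powr p)"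
  proof (rule f''_ge0_imp_convex[where f' = "\<lambda>x. p * x powr (p - 1)" and f'' = "\<lambda>x. p * ((p - 1) * x powr (p - 1 - 1))"])
    show "convex {0::real<..}" by simp
    fix x :: real assume x: "x \<in> {0<..}"
    show "DERIV (\<lambda>x. x powr p) x :> p * x powr (p - 1)"
      using x by (auto intro!: derivative_eq_intros)
    show "DERIV (\<lambda>x. p * x powr (p - 1)) x :> p * ((p - 1) * x powr (p - 1 - 1))"
      using x by (auto intro!: derivative_eq_intros)
    have "0 \<le> p * (p - 1)" using p by (auto simp: zero_le_mult_iff)
    then show "0 \<le> p * ((p - 1) * x powr (p - 1 - 1))"
      by (metis mult.assoc mult_nonneg_nonneg powr_ge_zero)
  qed
  have "t powr p - a powr p \<ge> p * a powr (p - 1) * (t - a)"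
    by (rule convex_on_imp_above_tangent[OF cv]) (use a t in \<open>auto intro!: derivative_eq_intros simp: interior_open\<close>)
  then show ?thesis by simp
qed

lemma tangent_concave:
  fixes p a t :: real
  assumes p: "0 \<le> p" "p \<le> 1" and a: "a > 0" and t: "t > 0"
  shows "t powr p \<le> a powr p + p * a powr (p - 1) * (t - a)"
proof -
  have cv: "convex_on {0<..} (\<lambda>x::real. - (x powr p))"
  proof (rule f''_ge0_imp_convex[where f' = "\<lambda>x. - (p * x powr (p - 1))" and f'' = "\<lambda>x. - (p * ((p - 1) * x powr (p - 1 - 1)))"])
    show "convex {0::real<..}" by simp
    fix x :: real assume x: "x \<in> {0<..}"
    show "DERIV (\<lambda>x. - (x powr p)) x :> - (p * x powr (p - 1))"
      using x by (auto intro!: derivative_eq_intros)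
    show "DERIV (\<lambda>x. - (p * x powr (p - 1))) x :> - (p * ((p - 1) * x powr (p - 1 - 1)))"
      using x by (auto intro!: derivative_eq_intros)
    have "p * (p - 1) \<le> 0" using p by (auto simp: mult_nonneg_nonpos)
    then show "0 \<le> - (p * ((p - 1) * x powr (p - 1 - 1)))"
      by (metis mult.assoc mult_nonpos_nonneg neg_0_le_iff_le powr_ge_zero)
  qed
  have "- (t powr p) - - (a powr p) \<ge> - (p * a powr (p - 1)) * (t - a)"
    by (rule convex_on_imp_above_tangent[OF cv]) (use a t in \<open>auto intro!: derivative_eq_intros simp: interior_open\<close>)
  then show ?thesis by simp
qed


lemma golomb_pos:
  assumes pdf: "is_pdf_nonneg f" and g: "0 < \<gamma>"
    and int: "set_integrable lborel {0..} (\<lambda>x. f x powr \<gamma>)"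
  shows "golomb_IGF f \<gamma> > 0"
proof -
  have nn: "\<forall>x. 0 \<le> f x" and fi: "set_integrable lborel {0..} f"
    and f1: "(LINT x:{0..}|lborel. f x) = 1"
    using pdf by (auto simp: is_pdf_nonneg_def)
  have ge: "golomb_IGF f \<gamma> \<ge> 0"
    unfolding golomb_IGF_def set_lebesgue_integral_def by (rule Bochner_Integration.integral_nonneg) (auto simp: indicator_def)
  show ?thesis
  proof (rule ccontr)
    assume "\<not> ?thesis"
    with ge have "golomb_IGF f \<gamma> = 0" by simp
    then have "integral\<^sup>L lborel (\<lambda>x. indicator {0..} x *\<^sub>R f x powr \<gamma>) = 0"
      by (simp add: golomb_IGF_def set_lebesgue_integral_def)
    then have "AE x in lborel. indicator {0..} x *\<^sub>R f x powr \<gamma> = 0"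
      using integral_nonneg_eq_0_iff_AE[of lborel "\<lambda>x. indicator {0..} x *\<^sub>R f x powr \<gamma>"] int
      by (auto simp: set_integrable_def indicator_def)
    then have "AE x in lborel. indicator {0..} x *\<^sub>R f x = 0"
      by eventually_elim (auto simp: indicator_def split: if_splits)
    then have "integral\<^sup>L lborel (\<lambda>x. indicator {0..} x *\<^sub>R f x) = 0"
      by (rule integral_eq_zero_AE)
    with f1 show False by (simp add: set_lebesgue_integral_def)
  qed
qed

lemma golomb_cs:
  assumes pdf: "is_pdf_nonneg f"
    and ia: "set_integrable lborel {0..} (\<lambda>x. f x powr \<alpha>)"
    and ih: "set_integrable lborel {0..} (\<lambda>x. f x powr ((\<alpha> + 1) / 2))"
    and A: "golomb_IGF f \<alpha> > 0"
  shows "(golomb_IGF f ((\<alpha> + 1) / 2))\<^sup>2 \<le> golomb_IGF f \<alpha>"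
proof -
  have nn: "\<forall>x. 0 \<le> f x" and fi: "set_integrable lborel {0..} f"
    and f1: "(LINT x:{0..}|lborel. f x) = 1"
    using pdf by (auto simp: is_pdf_nonneg_def)
  define s where "s = sqrt (golomb_IGF f \<alpha>)"
  have s: "s > 0" "s * s = golomb_IGF f \<alpha>" using A by (auto simp: s_def)
  have pw: "2 * y powr ((\<alpha> + 1) / 2) \<le> (1 / s) * y powr \<alpha> + s * y" if y: "y \<ge> 0" for y :: real
  proof (cases "y = 0")
    case True then show ?thesis by simp
  next
    case False
    then have yp: "y > 0" using y by simp
    define w where "w = y powr (\<alpha> / 2)"
    define r where "r = sqrt y"
    have e1: "y powr ((\<alpha> + 1) / 2) = w * r"
      using yp by (simp add: w_def r_def powr_half_sqrt[symmetric] powr_add[symmetric] add_divide_distrib)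
    have e2: "y powr \<alpha> = w * w" using yp by (simp add: w_def powr_add[symmetric])
    have e3: "y = r * r" using yp by (simp add: r_def)
    have "0 \<le> (w - s * r)^2" by simp
    then have "2 * s * (w * r) \<le> w * w + s * s * (r * r)" by (simp add: power2_eq_square algebra_simps)
    then have "2 * (w * r) \<le> (w * w) / s + s * (r * r)" using s
      by (simp add: field_simps)
    then show ?thesis using e1 e2 e3 by simp
  qed
  have "2 * golomb_IGF f ((\<alpha> + 1) / 2) = (LINT x:{0..}|lborel. 2 * f x powr ((\<alpha> + 1) / 2))"
    by (simp add: golomb_IGF_def)
  also have "\<dots> \<le> (LINT x:{0..}|lborel. (1 / s) * f x powr \<alpha> + s * f x)"
    by (rule set_integral_mono) (use ih ia fi pw nn in auto)
  also have "\<dots> = (1 / s) * golomb_IGF f \<alpha> + s"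
    using ia fi f1 by (simp add: golomb_IGF_def set_integral_add)
  also have "\<dots> = 2 * s" using s by (simp add: field_simps)
  finally have B: "golomb_IGF f ((\<alpha> + 1) / 2) \<le> s" by simp
  have "golomb_IGF f ((\<alpha> + 1) / 2) \<ge> 0"
    unfolding golomb_IGF_def set_lebesgue_integral_def by (rule Bochner_Integration.integral_nonneg) (auto simp: indicator_def)
  then have "(golomb_IGF f ((\<alpha> + 1) / 2))\<^sup>2 \<le> s\<^sup>2" using B by (simp add: power_mono)
  then show ?thesis using s by (simp add: power2_eq_square)
qed


lemma golomb_tangent:
  fixes p :: real
  assumes pdf: "is_pdf_nonneg f"
    and ia: "set_integrable lborel {0..} (\<lambda>x. f x powr \<alpha>)"
    and il: "set_integrable lborel {0..} (\<lambda>x. f x powr ((\<alpha> - 1) * p + 1))"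
    and A: "golomb_IGF f \<alpha> > 0"
  shows "(p \<le> 0 \<or> 1 \<le> p) \<Longrightarrow> golomb_IGF f \<alpha> powr p \<le> golomb_IGF f ((\<alpha> - 1) * p + 1)"
    and "0 \<le> p \<Longrightarrow> p \<le> 1 \<Longrightarrow> golomb_IGF f ((\<alpha> - 1) * p + 1) \<le> golomb_IGF f \<alpha> powr p"
proof -
  have nn: "\<forall>x. 0 \<le> f x" and fi: "set_integrable lborel {0..} f"
    and f1: "(LINT x:{0..}|lborel. f x) = 1"
    using pdf by (auto simp: is_pdf_nonneg_def)
  define a where "a = golomb_IGF f \<alpha>"
  have a: "a > 0" using A by (simp add: a_def)
  define c1 where "c1 = a powr p - p * a powr (p - 1) * a"
  define c2 where "c2 = p * a powr (p - 1)"
  have rep: "y powr ((\<alpha> - 1) * p + 1) = y * (y powr (\<alpha> - 1)) powr p"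
     "y powr \<alpha> = y * y powr (\<alpha> - 1)" if "y > 0" for y :: real
    using that by (simp add: powr_powr powr_add mult.commute, simp add: powr_diff)
  have RHS: "(LINT x:{0..}|lborel. c1 * f x + c2 * f x powr \<alpha>) = a powr p"
  proof -
    have "(LINT x:{0..}|lborel. c1 * f x + c2 * f x powr \<alpha>) = c1 * 1 + c2 * a"
      using ia fi f1 by (simp add: a_def golomb_IGF_def set_integral_add)
    then show ?thesis by (simp add: c1_def c2_def)
  qed
  have intR: "set_integrable lborel {0..} (\<lambda>x. c1 * f x + c2 * f x powr \<alpha>)"
    using ia fi by auto
  show "golomb_IGF f \<alpha> powr p \<le> golomb_IGF f ((\<alpha> - 1) * p + 1)" if p: "p \<le> 0 \<or> 1 \<le> p"
  proof -
    have pw: "c1 * y + c2 * y powr \<alpha> \<le> y powr ((\<alpha> - 1) * p + 1)" if y: "y \<ge> 0" for y :: real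
    proof (cases "y = 0")
      case True then show ?thesis by simp
    next
      case False
      then have yp: "y > 0" using y by simp
      have "a powr p + p * a powr (p - 1) * (y powr (\<alpha> - 1) - a) \<le> (y powr (\<alpha> - 1)) powr p"
        by (rule tangent_convex) (use p a yp in auto)
      then have "y * (a powr p + p * a powr (p - 1) * (y powr (\<alpha> - 1) - a)) \<le> y * (y powr (\<alpha> - 1)) powr p"
        using yp by (simp add: mult_left_mono)
      then show ?thesis using rep[OF yp] by (simp add: c1_def c2_def algebra_simps)
    qed
    have "a powr p \<le> golomb_IGF f ((\<alpha> - 1) * p + 1)"
      unfolding RHS[symmetric] golomb_IGF_def
      by (rule set_integral_mono) (use intR il pw nn in auto)
    then show ?thesis by (simp add: a_def)
  qed
  show "golomb_IGF f ((\<alpha> - 1) * p + 1) \<le> golomb_IGF f \<alpha> powr p" if p: "0 \<le> p" "p \<le> 1"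
  proof -
    have pw: "y powr ((\<alpha> - 1) * p + 1) \<le> c1 * y + c2 * y powr \<alpha>" if y: "y \<ge> 0" for y :: real
    proof (cases "y = 0")
      case True then show ?thesis by simp
    next
      case False
      then have yp: "y > 0" using y by simp
      have "(y powr (\<alpha> - 1)) powr p \<le> a powr p + p * a powr (p - 1) * (y powr (\<alpha> - 1) - a)"
        by (rule tangent_concave) (use p a yp in auto)
      then have "y * (y powr (\<alpha> - 1)) powr p \<le> y * (a powr p + p * a powr (p - 1) * (y powr (\<alpha> - 1) - a))"
        using yp by (simp add: mult_left_mono)
      then show ?thesis using rep[OF yp] by (simp add: c1_def c2_def algebra_simps)
    qed
    have "golomb_IGF f ((\<alpha> - 1) * p + 1) \<le> a powr p"
      unfolding RHS[symmetric] golomb_IGF_def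
      by (rule set_integral_mono) (use intR il pw nn in auto)
    then show ?thesis by (simp add: a_def)
  qed
qed


theorem proposition2p3:
  fixes f :: "real \<Rightarrow> real" and \<alpha> \<beta> l :: real
  assumes pdf: "is_pdf_nonneg f"
    and alpha: "0 < \<alpha>" "\<alpha> \<noteq> 1" and beta: "0 < \<beta>"
    and l_def: "l = \<alpha> * \<beta> - \<alpha> - \<beta> + 2"
    and int_alpha: "set_integrable lborel {0..} (\<lambda>x. f x powr \<alpha>)"
    and int_l: "set_integrable lborel {0..} (\<lambda>x. f x powr l)"
    and int_half: "set_integrable lborel {0..} (\<lambda>x. f x powr ((\<alpha> + 1) / 2))"
  shows
    "(\<alpha> < 1 \<longrightarrow>
        (((0 < \<beta> \<and> \<beta> < 1) \<or> 2 \<le> \<beta>) \<longrightarrow> renyi_IGF f \<alpha> \<beta> \<le> delta_fn \<alpha> * golomb_IGF f l) \<and>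
        (1 \<le> \<beta> \<longrightarrow> renyi_IGF f \<alpha> \<beta> \<ge> 1/2 * renyi_IGF f ((\<alpha> + 1) / 2) (2 * \<beta> - 1)) \<and>
        (\<beta> < 1 \<longrightarrow> renyi_IGF f \<alpha> \<beta> \<le> 1/2 * renyi_IGF f ((\<alpha> + 1) / 2) (2 * \<beta> - 1)))
   \<and> (1 < \<alpha> \<longrightarrow>
        ((1 < \<beta> \<and> \<beta> < 2) \<longrightarrow> renyi_IGF f \<alpha> \<beta> \<le> delta_fn \<alpha> * golomb_IGF f l) \<and>
        (1 \<le> \<beta> \<longrightarrow> renyi_IGF f \<alpha> \<beta> \<le> 1/2 * renyi_IGF f ((\<alpha> + 1) / 2) (2 * \<beta> - 1)) \<and>
        (\<beta> < 1 \<longrightarrow> renyi_IGF f \<alpha> \<beta> \<ge> 1/2 * renyi_IGF f ((\<alpha> + 1) / 2) (2 * \<beta> - 1)))"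
proof -
  define p where "p = \<beta> - 1"
  define A where "A = golomb_IGF f \<alpha>"
  define B where "B = golomb_IGF f ((\<alpha> + 1) / 2)"
  define G where "G = golomb_IGF f l"
  have Ap: "A > 0" unfolding A_def by (rule golomb_pos[OF pdf alpha(1) int_alpha])
  have Bp: "B > 0" unfolding B_def by (rule golomb_pos[OF pdf _ int_half]) (use alpha in auto)
  have BA: "B^2 \<le> A" unfolding A_def B_def using golomb_cs[OF pdf int_alpha int_half] Ap A_def by simp
  have B2p: "B^2 > 0" using Bp by simp
  have lp: "l = (\<alpha> - 1) * p + 1" by (simp add: l_def p_def algebra_simps)
  have R1: "renyi_IGF f \<alpha> \<beta> = delta_fn \<alpha> * A powr p"
    by (simp add: renyi_IGF_def delta_fn_def A_def p_def)
  have "B powr (2 * \<beta> - 1 - 1) = (B powr 2) powr p"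
    by (simp add: powr_powr p_def algebra_simps)
  also have "B powr 2 = B^2" using Bp by (simp add: powr_numeral)
  finally have "B powr (2 * \<beta> - 1 - 1) = (B^2) powr p" .
  then have R2: "1/2 * renyi_IGF f ((\<alpha> + 1) / 2) (2 * \<beta> - 1) = delta_fn \<alpha> * (B^2) powr p"
    using alpha by (simp add: renyi_IGF_def delta_fn_def B_def field_simps)
  have T1: "A powr p \<le> G" if "p \<le> 0 \<or> 1 \<le> p"
    using golomb_tangent(1)[OF pdf int_alpha _ _ that, of] int_l Ap unfolding A_def G_def lp by simp
  have T2: "G \<le> A powr p" if "0 \<le> p" "p \<le> 1"
    using golomb_tangent(2)[OF pdf int_alpha _ _ that] int_l Ap unfolding A_def G_def lp by simp
  have M1: "(B^2) powr p \<le> A powr p" if "0 \<le> p" using powr_mono2[OF that _ BA] B2p by simp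
  have M2: "A powr p \<le> (B^2) powr p" if "p \<le> 0" using powr_mono2'[OF that _ BA] B2p by simp
  have dpos: "\<alpha> < 1 \<Longrightarrow> delta_fn \<alpha> > 0" and dneg: "1 < \<alpha> \<Longrightarrow> delta_fn \<alpha> < 0"
    by (simp_all add: delta_fn_def)
  show ?thesis
    unfolding R1 R2 G_def[symmetric]
    using T1 T2 M1 M2 dpos dneg
    by (auto simp: p_def intro: mult_left_mono mult_left_mono_neg)
qed

end
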